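(* Let $d,D\ge 1$ and $n=2t+l$ with $t,l\ge 1$ integers. Fix any diagonal $\Omega=\mathrm{diag}(\omega_1,\dots,\omega_D)$ with $(\omega_i)$ a probability vector. For $(U,V,W,\Lambda)\in X:=U(dD)\times U(D)\times U(D)\times[0,1]^D$ (identifying $\Lambda\in[0,1]^D$ with the diagonal matrix it defines) let $$\rho_l(U,V,W,\Lambda,\Omega)=\mathrm{tr}_{A,B_1,\dots,B_t,B_{t+l+1},\dots,B_n}\Big(V\Lambda V^\dagger\, U_{A,B_1}\cdots U_{A,B_n}\big(W\Omega W^\dagger\otimes(|0\rangle\langle 0|)^{\otimes n}\big)U_{A,B_n}^\dagger\cdots U_{A,B_1}^\dagger\Big),$$ and define $f(U,V,W,\Lambda)=(\mathrm{tr}\,\rho_l(U,V,W,\Lambda,\Omega))^2$ and $g(U,V,W,\Lambda)=\mathrm{tr}\,\rho_l^2(U,V,W,\Lambda,\Omega)$. Equip $X$ with the metric $$d_1\big((U,V,W,\Lambda),(U',V',W',\Lambda')\big)=\|U-U'\|_2+\|V-V'\|_2+\|W-W'\|_2+\|\Lambda-\Lambda'\|_\infty.$$ Then the Lipschitz constants of both $f$ and $g$ with respect to $d_1$ are at most $4n+10$.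
   Context: $H_A\cong\mathbb{C}^D$ and $H_{B_1},\dots,H_{B_n}\cong\mathbb{C}^d$; $U_{A,B_i}$ denotes $U$ acting on $H_A\otimes H_{B_i}$ and as the identity elsewhere; $V\Lambda V^\dagger$ acts on $H_A$; $|0\rangle$ is a fixed unit vector in $\mathbb{C}^d$. $\|\cdot\|_2$ is the Hilbert–Schmidt norm and $\|\cdot\|_\infty$ is the operator norm (for diagonal $\Lambda$, the maximum absolute entry). *)

theory Defs
  imports "HOL-Analysis.Analysis"
begin

text \<open>Finite-dimensional matrices are represented as functions nat => nat => complex,
  with the dimension kept explicit; only entries with indices below the dimension matter.\<close>

definition unitary_mat :: "nat \<Rightarrow> (nat \<Rightarrow> nat \<Rightarrow> complex) \<Rightarrow> bool" where
  "unitary_mat N U \<longleftrightarrow>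
     (\<forall>i<N. \<forall>j<N. (\<Sum>k<N. cnj (U k i) * U k j) = (if i = j then 1 else 0))"

definition hs_dist :: "nat \<Rightarrow> (nat \<Rightarrow> nat \<Rightarrow> complex) \<Rightarrow> (nat \<Rightarrow> nat \<Rightarrow> complex) \<Rightarrow> real" where
  "hs_dist N U U' = sqrt (\<Sum>i<N. \<Sum>j<N. (cmod (U i j - U' i j))\<^sup>2)"

definition diag_dist :: "nat \<Rightarrow> (nat \<Rightarrow> real) \<Rightarrow> (nat \<Rightarrow> real) \<Rightarrow> real" where
  "diag_dist D L L' = (MAX i\<in>{..<D}. \<bar>L i - L' i\<bar>)"

text \<open>Basis of C^d tensored n times: words of length n over {0..<d}.\<close>
definition words :: "nat \<Rightarrow> nat \<Rightarrow> nat list set" where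
  "words d n = {bs. length bs = n \<and> set bs \<subseteq> {..<d}}"

text \<open>Basis indices of H_A (x) H_B1 (x) ... (x) H_Bn.\<close>
definition idx :: "nat \<Rightarrow> nat \<Rightarrow> nat \<Rightarrow> (nat \<times> nat list) set" where
  "idx D d n = {..<D} \<times> words d n"

type_synonym op = "nat \<times> nat list \<Rightarrow> nat \<times> nat list \<Rightarrow> complex"

definition omul :: "(nat \<times> nat list) set \<Rightarrow> op \<Rightarrow> op \<Rightarrow> op" where
  "omul S M N = (\<lambda>i j. \<Sum>k\<in>S. M i k * N k j)"

definition oadj :: "op \<Rightarrow> op" where
  "oadj M = (\<lambda>i j. cnj (M j i))"

definition oid :: op where
  "oid = (\<lambda>i j. if i = j then 1 else 0)"

text \<open>U_{A,B_(k+1)}: the dD x dD matrix U acting on H_A (x) H_B_(k+1) (basis index a*d+b),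
  identity on the other factors (positions are 0-indexed here).\<close>
definition U_AB :: "nat \<Rightarrow> (nat \<Rightarrow> nat \<Rightarrow> complex) \<Rightarrow> nat \<Rightarrow> op" where
  "U_AB d U k = (\<lambda>(a, bs) (a', bs').
     if bs[k := 0] = bs'[k := 0] then U (a * d + bs ! k) (a' * d + bs' ! k) else 0)"

fun U_chain :: "nat \<Rightarrow> nat \<Rightarrow> nat \<Rightarrow> (nat \<Rightarrow> nat \<Rightarrow> complex) \<Rightarrow> nat \<Rightarrow> op" where
  "U_chain D d n U 0 = oid"
| "U_chain D d n U (Suc m) = omul (idx D d n) (U_chain D d n U m) (U_AB d U m)"

text \<open>W Omega W^dagger (x) (|z><z|)^(x)n, with Omega = diag(omega).\<close>
definition init_state :: "nat \<Rightarrow> nat \<Rightarrow> (nat \<Rightarrow> real) \<Rightarrow> (nat \<Rightarrow> complex)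
    \<Rightarrow> (nat \<Rightarrow> nat \<Rightarrow> complex) \<Rightarrow> op" where
  "init_state D n \<omega> z W = (\<lambda>(a, bs) (a', bs').
     (\<Sum>i<D. W a i * complex_of_real (\<omega> i) * cnj (W a' i)) *
     (\<Prod>k<n. z (bs ! k) * cnj (z (bs' ! k))))"

definition obs_A :: "nat \<Rightarrow> (nat \<Rightarrow> nat \<Rightarrow> complex) \<Rightarrow> (nat \<Rightarrow> real) \<Rightarrow> op" where
  "obs_A D V L = (\<lambda>(a, bs) (a', bs').
     if bs = bs' then (\<Sum>i<D. V a i * complex_of_real (L i) * cnj (V a' i)) else 0)"

definition full_op :: "nat \<Rightarrow> nat \<Rightarrow> nat \<Rightarrow> (nat \<Rightarrow> real) \<Rightarrow> (nat \<Rightarrow> complex)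
    \<Rightarrow> (nat \<Rightarrow> nat \<Rightarrow> complex) \<Rightarrow> (nat \<Rightarrow> nat \<Rightarrow> complex) \<Rightarrow> (nat \<Rightarrow> nat \<Rightarrow> complex)
    \<Rightarrow> (nat \<Rightarrow> real) \<Rightarrow> op" where
  "full_op d D n \<omega> z U V W L =
     (let S = idx D d n; P = U_chain D d n U n in
      omul S (obs_A D V L) (omul S P (omul S (init_state D n \<omega> z W) (oadj P))))"

text \<open>rho_l: partial trace over A, B_1..B_t, B_(t+l+1)..B_n (n = 2t+l), leaving B_(t+1)..B_(t+l);
  indexed by words of length l.\<close>
definition rho_l :: "nat \<Rightarrow> nat \<Rightarrow> nat \<Rightarrow> nat \<Rightarrow> (nat \<Rightarrow> real) \<Rightarrow> (nat \<Rightarrow> complex)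
    \<Rightarrow> (nat \<Rightarrow> nat \<Rightarrow> complex) \<Rightarrow> (nat \<Rightarrow> nat \<Rightarrow> complex) \<Rightarrow> (nat \<Rightarrow> nat \<Rightarrow> complex)
    \<Rightarrow> (nat \<Rightarrow> real) \<Rightarrow> nat list \<Rightarrow> nat list \<Rightarrow> complex" where
  "rho_l d D t l \<omega> z U V W L = (\<lambda>cs cs'.
     (let M = full_op d D (2 * t + l) \<omega> z U V W L in
      \<Sum>a<D. \<Sum>xs\<in>words d t. \<Sum>ys\<in>words d t. M (a, xs @ cs @ ys) (a, xs @ cs' @ ys)))"

definition tr_rho :: "nat \<Rightarrow> nat \<Rightarrow> (nat list \<Rightarrow> nat list \<Rightarrow> complex) \<Rightarrow> complex" where
  "tr_rho d l R = (\<Sum>cs\<in>words d l. R cs cs)"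

definition tr_rho_sq :: "nat \<Rightarrow> nat \<Rightarrow> (nat list \<Rightarrow> nat list \<Rightarrow> complex) \<Rightarrow> complex" where
  "tr_rho_sq d l R = (\<Sum>cs\<in>words d l. \<Sum>cs'\<in>words d l. R cs cs' * R cs' cs)"

definition in_X :: "nat \<Rightarrow> nat \<Rightarrow> (nat \<Rightarrow> nat \<Rightarrow> complex) \<Rightarrow> (nat \<Rightarrow> nat \<Rightarrow> complex)
    \<Rightarrow> (nat \<Rightarrow> nat \<Rightarrow> complex) \<Rightarrow> (nat \<Rightarrow> real) \<Rightarrow> bool" where
  "in_X d D U V W L \<longleftrightarrow> unitary_mat (d * D) U \<and> unitary_mat D V \<and> unitary_mat D W \<and>
     (\<forall>i<D. 0 \<le> L i \<and> L i \<le> 1)"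

definition d1 :: "nat \<Rightarrow> nat \<Rightarrow> (nat \<Rightarrow> nat \<Rightarrow> complex) \<times> (nat \<Rightarrow> nat \<Rightarrow> complex) \<times>
    (nat \<Rightarrow> nat \<Rightarrow> complex) \<times> (nat \<Rightarrow> real) \<Rightarrow> (nat \<Rightarrow> nat \<Rightarrow> complex) \<times> (nat \<Rightarrow> nat \<Rightarrow> complex) \<times>
    (nat \<Rightarrow> nat \<Rightarrow> complex) \<times> (nat \<Rightarrow> real) \<Rightarrow> real" where
  "d1 d D x y = (case (x, y) of ((U, V, W, L), (U', V', W', L')) \<Rightarrow>
     hs_dist (d * D) U U' + hs_dist D V V' + hs_dist D W W' + diag_dist D L L')"

end

theory Submission
  imports Defs
begin


definition vn :: "'a set \<Rightarrow> ('a \<Rightarrow> complex) \<Rightarrow> real" where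
  "vn A x = L2_set (\<lambda>s. cmod (x s)) A"

definition app :: "'a set \<Rightarrow> ('b \<Rightarrow> 'a \<Rightarrow> complex) \<Rightarrow> ('a \<Rightarrow> complex) \<Rightarrow> 'b \<Rightarrow> complex" where
  "app A M x = (\<lambda>p. \<Sum>s\<in>A. M p s * x s)"

definition gmul :: "'a set \<Rightarrow> ('b \<Rightarrow> 'a \<Rightarrow> complex) \<Rightarrow> ('a \<Rightarrow> 'c \<Rightarrow> complex) \<Rightarrow> 'b \<Rightarrow> 'c \<Rightarrow> complex" where
  "gmul A M N = (\<lambda>i j. \<Sum>k\<in>A. M i k * N k j)"

definition bnd :: "'a set \<Rightarrow> ('a \<Rightarrow> 'a \<Rightarrow> complex) \<Rightarrow> real \<Rightarrow> bool" where
  "bnd A M c \<longleftrightarrow> (\<forall>x. vn A (app A M x) \<le> c * vn A x)"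

lemma vn_nonneg[simp]: "0 \<le> vn A x" by (simp add: vn_def)

lemma vn_sq: "(vn A x)\<^sup>2 = (\<Sum>s\<in>A. (cmod (x s))\<^sup>2)"
  unfolding vn_def L2_set_def by (simp add: sum_nonneg)

lemma vn_le_sq: assumes "(vn A x)\<^sup>2 \<le> (c * vn B y)\<^sup>2" "c \<ge> 0" shows "vn A x \<le> c * vn B y"
  using assms by (metis power2_le_imp_le mult_nonneg_nonneg vn_nonneg)

lemma vn_triangle: "vn A (\<lambda>s. x s + y s) \<le> vn A x + vn A y"
proof -
  have "vn A (\<lambda>s. x s + y s) \<le> L2_set (\<lambda>s. cmod (x s) + cmod (y s)) A"
    unfolding vn_def by (rule L2_set_mono) (auto simp: norm_triangle_ineq)
  also have "\<dots> \<le> vn A x + vn A y" unfolding vn_def by (rule L2_set_triangle_ineq)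
  finally show ?thesis .
qed

lemma vn_diff_triangle: "vn A (\<lambda>s. x s - y s) \<le> vn A (\<lambda>s. x s - z s) + vn A (\<lambda>s. z s - y s)"
  using vn_triangle[of A "\<lambda>s. x s - z s" "\<lambda>s. z s - y s"] by simp

lemma vn_minus_commute: "vn A (\<lambda>s. x s - y s) = vn A (\<lambda>s. y s - x s)"
  unfolding vn_def by (simp add: norm_minus_commute)

lemma vn_scale: "vn A (\<lambda>s. c * x s) = cmod c * vn A x"
  unfolding vn_def by (simp add: norm_mult L2_set_right_distrib)

lemma cs_ineq: "cmod (\<Sum>s\<in>A. x s * y s) \<le> vn A x * vn A y"
proof -
  have "cmod (\<Sum>s\<in>A. x s * y s) \<le> (\<Sum>s\<in>A. \<bar>cmod (x s)\<bar> * \<bar>cmod (y s)\<bar>)"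
    by (rule order_trans[OF norm_sum]) (simp add: norm_mult)
  also have "\<dots> \<le> vn A x * vn A y" unfolding vn_def by (rule L2_set_mult_ineq)
  finally show ?thesis .
qed

lemma cs_ineq_cnj: "cmod (\<Sum>s\<in>A. x s * cnj (y s)) \<le> vn A x * vn A y"
  using cs_ineq[where A=A and x=x and y="\<lambda>s. cnj (y s)"] by (simp add: vn_def)

lemma vn_mono_inj: assumes "inj_on f A" "f ` A \<subseteq> B" "finite B"
  shows "vn A (\<lambda>a. x (f a)) \<le> vn B x"
proof -
  have "(\<Sum>a\<in>A. (cmod (x (f a)))\<^sup>2) = (\<Sum>b\<in>f ` A. (cmod (x b))\<^sup>2)"
    using sum.reindex[OF assms(1), of "\<lambda>b. (cmod (x b))\<^sup>2"] by simp
  also have "\<dots> \<le> (\<Sum>b\<in>B. (cmod (x b))\<^sup>2)"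
    by (rule sum_mono2[OF assms(3) assms(2)]) auto
  finally show ?thesis unfolding vn_def L2_set_def by simp
qed

lemma app_diff_vec: "app A M (\<lambda>s. x s - y s) = (\<lambda>p. app A M x p - app A M y p)"
  unfolding app_def by (auto simp: algebra_simps sum_subtractf)

lemma app_diff_mat: "app A (\<lambda>p s. M p s - N p s) x = (\<lambda>p. app A M x p - app A N x p)"
  unfolding app_def by (auto simp: algebra_simps sum_subtractf)

lemma app_gmul: assumes "finite A" shows "app A (gmul A M N) x = app A M (app A N x)"
proof
  fix p
  have "app A (gmul A M N) x p = (\<Sum>s\<in>A. \<Sum>k\<in>A. M p k * (N k s * x s))"
    unfolding app_def gmul_def by (simp add: sum_distrib_right mult.assoc)
  also have "\<dots> = (\<Sum>k\<in>A. \<Sum>s\<in>A. M p k * (N k s * x s))" by (rule sum.swap)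
  also have "\<dots> = app A M (app A N x) p"
    unfolding app_def by (simp add: sum_distrib_left)
  finally show "app A (gmul A M N) x p = app A M (app A N x) p" .
qed

lemma bndD: "bnd A M c \<Longrightarrow> vn A (app A M x) \<le> c * vn A x" by (simp add: bnd_def)

lemma bnd_gmul: assumes "finite A" "bnd A M a" "bnd A N b" "a \<ge> 0"
  shows "bnd A (gmul A M N) (a * b)"
  unfolding bnd_def app_gmul[OF assms(1)]
proof
  fix x
  have "vn A (app A M (app A N x)) \<le> a * vn A (app A N x)" using bndD[OF assms(2)] .
  also have "\<dots> \<le> a * (b * vn A x)" using bndD[OF assms(3)] assms(4) by (simp add: mult_left_mono)
  finally show "vn A (app A M (app A N x)) \<le> a * b * vn A x" by simp
qed



lemma bnd_hs: "bnd {..<N} K (sqrt (\<Sum>i<N. \<Sum>j<N. (cmod (K i j))\<^sup>2))"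
  unfolding bnd_def
proof
  fix x
  let ?c = "sqrt (\<Sum>i<N. \<Sum>j<N. (cmod (K i j))\<^sup>2)"
  have c0: "?c \<ge> 0" by (simp add: sum_nonneg)
  have "(vn {..<N} (app {..<N} K x))\<^sup>2 = (\<Sum>i<N. (cmod (\<Sum>j<N. K i j * x j))\<^sup>2)"
    by (simp add: vn_sq app_def)
  also have "\<dots> \<le> (\<Sum>i<N. (vn {..<N} (K i) * vn {..<N} x)\<^sup>2)"
    by (rule sum_mono, rule power_mono[OF cs_ineq]) auto
  also have "\<dots> = (\<Sum>i<N. (\<Sum>j<N. (cmod (K i j))\<^sup>2)) * (vn {..<N} x)\<^sup>2"
    by (simp add: power_mult_distrib vn_sq sum_distrib_right)
  also have "\<dots> = (?c * vn {..<N} x)\<^sup>2"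
    by (simp add: power_mult_distrib sum_nonneg)
  finally show "vn {..<N} (app {..<N} K x) \<le> ?c * vn {..<N} x"
    by (rule vn_le_sq[OF _ c0])
qed

lemma cmod_sq_cnj: "complex_of_real ((cmod w)\<^sup>2) = w * cnj w"
  by (rule complex_norm_square)

lemma of_real_sum_sq: "complex_of_real (\<Sum>i\<in>A. (cmod (f i))\<^sup>2) = (\<Sum>i\<in>A. f i * cnj (f i))"
  by (simp only: of_real_sum cmod_sq_cnj)

lemma unitary_norm_eq:
  assumes "unitary_mat N U"
  shows "(\<Sum>i<N. (cmod (\<Sum>j<N. U i j * x j))\<^sup>2) = (\<Sum>j<N. (cmod (x j))\<^sup>2)"
proof -
  have "complex_of_real (\<Sum>i<N. (cmod (\<Sum>j<N. U i j * x j))\<^sup>2)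
      = (\<Sum>i<N. (\<Sum>j<N. U i j * x j) * (\<Sum>k<N. cnj (U i k) * cnj (x k)))"
    by (simp only: of_real_sum_sq cnj_sum complex_cnj_mult)
  also have "\<dots> = (\<Sum>i<N. \<Sum>j<N. \<Sum>k<N. x j * cnj (x k) * (cnj (U i k) * U i j))"
    by (simp only: sum_product) (intro sum.cong refl; simp add: ac_simps)
  also have "\<dots> = (\<Sum>j<N. \<Sum>k<N. x j * cnj (x k) * (\<Sum>i<N. cnj (U i k) * U i j))"
  proof -
    have "\<And>j k. (\<Sum>i<N. x j * cnj (x k) * (cnj (U i k) * U i j)) = x j * cnj (x k) * (\<Sum>i<N. cnj (U i k) * U i j)"
      by (simp add: sum_distrib_left)
    moreover have "(\<Sum>i<N. \<Sum>j<N. \<Sum>k<N. x j * cnj (x k) * (cnj (U i k) * U i j))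
       = (\<Sum>j<N. \<Sum>k<N. \<Sum>i<N. x j * cnj (x k) * (cnj (U i k) * U i j))"
      by (subst sum.swap, rule sum.cong[OF refl], rule sum.swap)
    ultimately show ?thesis by simp
  qed
  also have "\<dots> = (\<Sum>j<N. \<Sum>k<N. x j * cnj (x k) * (if k = j then 1 else 0))"
  proof -
    have u: "\<And>j k. j<N \<Longrightarrow> k<N \<Longrightarrow> (\<Sum>i<N. cnj (U i k) * U i j) = (if k = j then 1 else 0)"
      using assms unfolding unitary_mat_def by blast
    show ?thesis by (rule sum.cong[OF refl], rule sum.cong[OF refl]) (simp add: u)
  qed
  also have "\<dots> = (\<Sum>j<N. x j * cnj (x j))"
  proof (rule sum.cong[OF refl])
    fix j assume j: "j \<in> {..<N}"
    have "(\<Sum>k<N. x j * cnj (x k) * (if k = j then 1 else 0)) = (\<Sum>k<N. if j = k then x j * cnj (x k) else 0)"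
      by (rule sum.cong) auto
    also have "\<dots> = x j * cnj (x j)" using j by (simp only: sum.delta' finite_lessThan) simp
    finally show "(\<Sum>k<N. x j * cnj (x k) * (if k = j then 1 else 0)) = x j * cnj (x j)" .
  qed
  also have "\<dots> = complex_of_real (\<Sum>j<N. (cmod (x j))\<^sup>2)"
    by (simp only: of_real_sum_sq)
  finally show ?thesis using of_real_eq_iff by blast
qed

lemma bnd_unitary: assumes "unitary_mat N U" shows "bnd {..<N} U 1"
  unfolding bnd_def
proof
  fix x
  have "(vn {..<N} (app {..<N} U x))\<^sup>2 = (1 * vn {..<N} x)\<^sup>2"
    using unitary_norm_eq[OF assms, of x] by (simp add: vn_sq app_def)
  then show "vn {..<N} (app {..<N} U x) \<le> 1 * vn {..<N} x" by (intro vn_le_sq) auto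
qed

lemma bnd_adj_unitary: assumes "unitary_mat N V" shows "bnd {..<N} (\<lambda>i j. cnj (V j i)) 1"
  unfolding bnd_def
proof
  fix y
  let ?w = "app {..<N} (\<lambda>i j. cnj (V j i)) y"
  have "complex_of_real ((vn {..<N} ?w)\<^sup>2) = (\<Sum>j<N. ?w j * cnj (?w j))"
    by (simp only: vn_sq of_real_sum_sq)
  also have "\<dots> = (\<Sum>j<N. \<Sum>a<N. cnj (V a j) * y a * cnj (?w j))"
    by (simp add: app_def sum_distrib_right)
  also have "\<dots> = (\<Sum>a<N. \<Sum>j<N. cnj (V a j) * y a * cnj (?w j))"
    by (rule sum.swap)
  also have "\<dots> = (\<Sum>a<N. y a * (\<Sum>j<N. cnj (V a j * ?w j)))"
    by (rule sum.cong[OF refl]) (simp add: sum_distrib_left mult_ac)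
  also have "\<dots> = (\<Sum>a<N. y a * cnj (app {..<N} V ?w a))"
    by (simp only: app_def cnj_sum)
  finally have eq: "complex_of_real ((vn {..<N} ?w)\<^sup>2) = (\<Sum>a<N. y a * cnj (app {..<N} V ?w a))" .
  have "(vn {..<N} ?w)\<^sup>2 = cmod (complex_of_real ((vn {..<N} ?w)\<^sup>2))" by (metis abs_power2 norm_of_real)
  also have "\<dots> \<le> vn {..<N} y * vn {..<N} (app {..<N} V ?w)"
    unfolding eq by (rule cs_ineq_cnj)
  also have "\<dots> \<le> vn {..<N} y * vn {..<N} ?w"
    using bndD[OF bnd_unitary[OF assms], of ?w] by (simp add: mult_left_mono)
  finally have "(vn {..<N} ?w)\<^sup>2 \<le> vn {..<N} y * vn {..<N} ?w" .
  then show "vn {..<N} ?w \<le> 1 * vn {..<N} y"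
  proof (cases "vn {..<N} ?w = 0")
    case False
    then have "0 < vn {..<N} ?w" using vn_nonneg[of "{..<N}" ?w] by linarith
    then show ?thesis using \<open>(vn {..<N} ?w)\<^sup>2 \<le> vn {..<N} y * vn {..<N} ?w\<close>
      by (simp add: power2_eq_square)
  qed simp
qed

lemma sum_if_delta: "finite A \<Longrightarrow> (\<Sum>s\<in>A. (if p = s then c else 0) * f s) = (if p \<in> A then c * f p else (0::complex))"
  by (induct A rule: finite_induct) auto

lemma bnd_diag:
  fixes N :: nat
  assumes "\<And>i. i < N \<Longrightarrow> cmod (L i) \<le> c" "c \<ge> 0"
  shows "bnd {..<N} (\<lambda>i j. if i = j then L i else 0) c"
  unfolding bnd_def
proof
  fix x
  have appeq: "app {..<N} (\<lambda>i j. if i = j then L i else 0) x = (\<lambda>i. if i < N then L i * x i else 0)"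
    unfolding app_def by (rule ext) (simp add: sum_if_delta)
  have "vn {..<N} (app {..<N} (\<lambda>i j. if i = j then L i else 0) x) = vn {..<N} (\<lambda>i. L i * x i)"
    unfolding vn_def appeq by (rule L2_set_cong) auto
  also have "\<dots> \<le> L2_set (\<lambda>i. c * cmod (x i)) {..<N}"
    unfolding vn_def
  proof (rule L2_set_mono)
    fix i assume "i \<in> {..<N}"
    then show "cmod (L i * x i) \<le> c * cmod (x i)" using assms(1)[of i]
      by (simp add: norm_mult mult_right_mono)
  qed simp
  also have "\<dots> = c * vn {..<N} x" unfolding vn_def using assms(2) by (simp add: L2_set_right_distrib)
  finally show "vn {..<N} (app {..<N} (\<lambda>i j. if i = j then L i else 0) x) \<le> c * vn {..<N} x" .
qed

lemma hs_adj: "(\<Sum>i<N. \<Sum>j<N. (cmod (cnj (V j i) - cnj (V' j i)))\<^sup>2) = (\<Sum>i<N. \<Sum>j<N. (cmod (V i j - V' i j))\<^sup>2)"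
  by (subst sum.swap) (simp flip: complex_cnj_diff)



definition Kmat :: "nat \<Rightarrow> (nat \<Rightarrow> nat \<Rightarrow> complex) \<Rightarrow> (nat \<Rightarrow> real) \<Rightarrow> nat \<Rightarrow> nat \<Rightarrow> complex" where
  "Kmat D V L = (\<lambda>a a'. \<Sum>i<D. V a i * complex_of_real (L i) * cnj (V a' i))"

definition dg :: "(nat \<Rightarrow> real) \<Rightarrow> nat \<Rightarrow> nat \<Rightarrow> complex" where
  "dg L = (\<lambda>i j. if i = j then complex_of_real (L i) else 0)"

definition adj :: "(nat \<Rightarrow> nat \<Rightarrow> complex) \<Rightarrow> nat \<Rightarrow> nat \<Rightarrow> complex" where
  "adj V = (\<lambda>i j. cnj (V j i))"

lemma Kmat_app: "app {..<D} (Kmat D V L) x = app {..<D} V (app {..<D} (dg L) (app {..<D} (adj V) x))"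
proof -
  have "Kmat D V L = gmul {..<D} V (gmul {..<D} (dg L) (adj V))"
    unfolding Kmat_def gmul_def dg_def adj_def
    by (intro ext sum.cong refl) (simp add: sum_if_delta mult.assoc)
  then show ?thesis by (simp add: app_gmul)
qed

lemma bnd_hs_dist: "bnd {..<N} (\<lambda>i j. U i j - U' i j) (hs_dist N U U')"
  using bnd_hs[of N "\<lambda>i j. U i j - U' i j"] unfolding hs_dist_def .

lemma bnd_hs_dist_adj: "bnd {..<N} (\<lambda>i j. adj U i j - adj U' i j) (hs_dist N U U')"
  using bnd_hs[of N "\<lambda>i j. adj U i j - adj U' i j"] unfolding hs_dist_def adj_def hs_adj .

lemma hs_dist_nonneg: "0 \<le> hs_dist N U U'"
  unfolding hs_dist_def by (simp add: sum_nonneg)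

lemma diag_dist_ge: "i < D \<Longrightarrow> \<bar>L i - L' i\<bar> \<le> diag_dist D L L'"
  unfolding diag_dist_def by (rule Max_ge) auto

lemma diag_dist_nonneg: "D \<ge> 1 \<Longrightarrow> 0 \<le> diag_dist D L L'"
  using diag_dist_ge[of 0 D L L'] by linarith

lemma bnd_dg: "(\<And>i. i < D \<Longrightarrow> 0 \<le> L i \<and> L i \<le> 1) \<Longrightarrow> bnd {..<D} (dg L) 1"
  unfolding dg_def by (rule bnd_diag) auto

lemma bnd_dg_diff: "D \<ge> 1 \<Longrightarrow> bnd {..<D} (\<lambda>i j. dg L i j - dg L' i j) (diag_dist D L L')"
proof -
  assume D: "D \<ge> 1"
  have "(\<lambda>i j. dg L i j - dg L' i j) = (\<lambda>i j. if i = j then complex_of_real (L i - L' i) else 0)"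
    unfolding dg_def by (intro ext) auto
  moreover have "bnd {..<D} (\<lambda>i j. if i = j then complex_of_real (L i - L' i) else 0) (diag_dist D L L')"
  proof (rule bnd_diag)
    fix i assume "i < D"
    then show "cmod (complex_of_real (L i - L' i)) \<le> diag_dist D L L'"
      by (simp only: norm_of_real diag_dist_ge)
  qed (rule diag_dist_nonneg[OF D])
  ultimately show ?thesis by simp
qed

lemma bnd_K:
  assumes "unitary_mat D V" "\<And>i. i < D \<Longrightarrow> 0 \<le> L i \<and> L i \<le> 1"
  shows "bnd {..<D} (Kmat D V L) 1"
  unfolding bnd_def Kmat_app
proof
  fix x
  have "vn {..<D} (app {..<D} V (app {..<D} (dg L) (app {..<D} (adj V) x)))
        \<le> 1 * vn {..<D} (app {..<D} (dg L) (app {..<D} (adj V) x))"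
    by (rule bndD[OF bnd_unitary[OF assms(1)]])
  also have "\<dots> \<le> 1 * (1 * vn {..<D} (app {..<D} (adj V) x))"
    using bndD[OF bnd_dg[OF assms(2)]] by simp
  also have "\<dots> \<le> 1 * (1 * (1 * vn {..<D} x))"
    using bndD[OF bnd_adj_unitary[OF assms(1)]] unfolding adj_def by simp
  finally show "vn {..<D} (app {..<D} V (app {..<D} (dg L) (app {..<D} (adj V) x))) \<le> 1 * vn {..<D} x"
    by simp
qed

lemma bnd_K_diff:
  assumes D: "D \<ge> 1" and V: "unitary_mat D V" "unitary_mat D V'"
    and L: "\<And>i. i < D \<Longrightarrow> 0 \<le> L i \<and> L i \<le> 1" "\<And>i. i < D \<Longrightarrow> 0 \<le> L' i \<and> L' i \<le> 1"
  shows "bnd {..<D} (\<lambda>a a'. Kmat D V L a a' - Kmat D V' L' a a') (2 * hs_dist D V V' + diag_dist D L L')"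
  unfolding bnd_def
proof
  fix x
  let ?S = "{..<D}"
  let ?h = "hs_dist D V V'" and ?dd = "diag_dist D L L'"
  define y where "y = app ?S (adj V) x"
  define y' where "y' = app ?S (adj V') x"
  define a where "a = app ?S (dg L) y"
  define b where "b = app ?S (dg L') y'"
  have eq: "app ?S (\<lambda>a a'. Kmat D V L a a' - Kmat D V' L' a a') x
     = (\<lambda>p. app ?S (\<lambda>i j. V i j - V' i j) a p + app ?S V' (\<lambda>s. a s - b s) p)"
    unfolding app_diff_mat Kmat_app app_diff_vec a_def b_def y_def y'_def by (rule ext) simp
  have eq2: "(\<lambda>s. a s - b s) = (\<lambda>p. app ?S (\<lambda>i j. dg L i j - dg L' i j) y p + app ?S (dg L') (\<lambda>s. y s - y' s) p)"
    unfolding app_diff_mat app_diff_vec a_def b_def by (rule ext) simp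
  have ya: "vn ?S a \<le> vn ?S x"
  proof -
    have "vn ?S a \<le> 1 * vn ?S y" unfolding a_def by (rule bndD[OF bnd_dg[OF L(1)]])
    also have "\<dots> \<le> 1 * vn ?S x" unfolding y_def using bndD[OF bnd_adj_unitary[OF V(1)]] by (simp add: adj_def)
    finally show ?thesis by simp
  qed
  have yy: "vn ?S (\<lambda>s. y s - y' s) \<le> ?h * vn ?S x"
    unfolding y_def y'_def app_diff_mat[symmetric] by (rule bndD[OF bnd_hs_dist_adj])
  have yb: "vn ?S y \<le> vn ?S x"
    unfolding y_def using bndD[OF bnd_adj_unitary[OF V(1)]] by (simp add: adj_def)
  have ab: "vn ?S (\<lambda>s. a s - b s) \<le> ?dd * vn ?S x + ?h * vn ?S x"
  proof -
    have "vn ?S (\<lambda>s. a s - b s) \<le> vn ?S (app ?S (\<lambda>i j. dg L i j - dg L' i j) y) + vn ?S (app ?S (dg L') (\<lambda>s. y s - y' s))"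
      unfolding eq2 by (rule vn_triangle)
    also have "\<dots> \<le> ?dd * vn ?S y + 1 * vn ?S (\<lambda>s. y s - y' s)"
      by (intro add_mono bndD[OF bnd_dg_diff[OF D]] bndD[OF bnd_dg[OF L(2)]])
    also have "\<dots> \<le> ?dd * vn ?S x + ?h * vn ?S x"
      using yy yb diag_dist_nonneg[OF D, of L L'] by (intro add_mono mult_left_mono) auto
    finally show ?thesis .
  qed
  have "vn ?S (app ?S (\<lambda>a a'. Kmat D V L a a' - Kmat D V' L' a a') x)
     \<le> vn ?S (app ?S (\<lambda>i j. V i j - V' i j) a) + vn ?S (app ?S V' (\<lambda>s. a s - b s))"
    unfolding eq by (rule vn_triangle)
  also have "\<dots> \<le> ?h * vn ?S a + 1 * vn ?S (\<lambda>s. a s - b s)"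
    by (intro add_mono bndD[OF bnd_hs_dist] bndD[OF bnd_unitary[OF V(2)]])
  also have "\<dots> \<le> ?h * vn ?S x + (?dd * vn ?S x + ?h * vn ?S x)"
    using ya ab hs_dist_nonneg[of D V V'] by (intro add_mono mult_left_mono) auto
  finally show "vn ?S (app ?S (\<lambda>a a'. Kmat D V L a a' - Kmat D V' L' a a') x) \<le> (2 * ?h + ?dd) * vn ?S x"
    by (simp add: algebra_simps)
qed



lemma sum_lift:
  assumes "bij_betw e (R \<times> {..<N}) S"
  shows "(\<Sum>s\<in>S. g s) = (\<Sum>r\<in>R. \<Sum>j<N. g (e (r, j)))"
proof -
  have "(\<Sum>s\<in>S. g s) = (\<Sum>q\<in>R \<times> {..<N}. g (e q))"
    using sum.reindex_bij_betw[OF assms, of g] by simp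
  also have "\<dots> = (\<Sum>r\<in>R. \<Sum>j<N. g (e (r, j)))"
    by (simp add: sum.cartesian_product case_prod_beta')
  finally show ?thesis .
qed

lemma bnd_lift:
  assumes bij: "bij_betw e (R \<times> {..<N}) S" and fin: "finite R"
    and M: "\<And>r j r' j'. r \<in> R \<Longrightarrow> j < N \<Longrightarrow> r' \<in> R \<Longrightarrow> j' < N \<Longrightarrow>
              M (e (r, j)) (e (r', j')) = (if r = r' then K j j' else 0)"
    and K: "bnd {..<N} K c" and c: "c \<ge> 0"
  shows "bnd S M c"
  unfolding bnd_def
proof
  fix x :: "_ \<Rightarrow> complex"
  define y where "y r = (\<lambda>j. x (e (r, j)))" for r
  have appeq: "app S M x (e (r, j)) = app {..<N} K (y r) j" if r: "r \<in> R" and j: "j < N" for r j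
  proof -
    have "app S M x (e (r, j)) = (\<Sum>r'\<in>R. \<Sum>j'<N. M (e (r, j)) (e (r', j')) * x (e (r', j')))"
      unfolding app_def by (rule sum_lift[OF bij])
    also have "\<dots> = (\<Sum>r'\<in>R. if r = r' then (\<Sum>j'<N. K j j' * x (e (r', j'))) else 0)"
      using r j M by (intro sum.cong refl) auto
    also have "\<dots> = (\<Sum>j'<N. K j j' * x (e (r, j')))"
      using r fin by simp
    finally show ?thesis unfolding app_def y_def .
  qed
  have "(vn S (app S M x))\<^sup>2 = (\<Sum>r\<in>R. \<Sum>j<N. (cmod (app S M x (e (r, j))))\<^sup>2)"
    unfolding vn_sq by (rule sum_lift[OF bij])
  also have "\<dots> = (\<Sum>r\<in>R. (vn {..<N} (app {..<N} K (y r)))\<^sup>2)"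
    unfolding vn_sq using appeq by (intro sum.cong refl) auto
  also have "\<dots> \<le> (\<Sum>r\<in>R. (c * vn {..<N} (y r))\<^sup>2)"
    using bndD[OF K] by (intro sum_mono power_mono) auto
  also have "\<dots> = c\<^sup>2 * (\<Sum>r\<in>R. \<Sum>j<N. (cmod (x (e (r, j))))\<^sup>2)"
    by (simp add: power_mult_distrib vn_sq y_def sum_distrib_left)
  also have "\<dots> = (c * vn S x)\<^sup>2"
    by (simp add: power_mult_distrib vn_sq sum_lift[OF bij])
  finally show "vn S (app S M x) \<le> c * vn S x" by (rule vn_le_sq[OF _ c])
qed

lemma finite_words: "finite (words d n)"
proof -
  have "words d n = {xs. set xs \<subseteq> {..<d} \<and> length xs = n}" unfolding words_def by auto
  then show ?thesis using finite_lists_length_eq[of "{..<d}" n] by simp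
qed

lemma finite_idx: "finite (idx D d n)"
  unfolding idx_def using finite_words by simp

lemma bij_obs: "bij_betw (\<lambda>(bs, a). (a, bs)) (words d n \<times> {..<D}) (idx D d n)"
  unfolding idx_def by (rule bij_betw_byWitness[where f'="\<lambda>(a, bs). (bs, a)"]) auto

lemma obs_A_Kmat: "obs_A D V L = (\<lambda>(a, bs) (a', bs'). if bs = bs' then Kmat D V L a a' else 0)"
  unfolding obs_A_def Kmat_def by simp

lemma bnd_obs:
  assumes "unitary_mat D V" "\<And>i. i < D \<Longrightarrow> 0 \<le> L i \<and> L i \<le> 1"
  shows "bnd (idx D d n) (obs_A D V L) 1"
  by (rule bnd_lift[OF bij_obs finite_words _ bnd_K[OF assms]]) (auto simp: obs_A_Kmat)

lemma bnd_obs_diff: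
  assumes "D \<ge> 1" "unitary_mat D V" "unitary_mat D V'"
    "\<And>i. i < D \<Longrightarrow> 0 \<le> L i \<and> L i \<le> 1" "\<And>i. i < D \<Longrightarrow> 0 \<le> L' i \<and> L' i \<le> 1"
  shows "bnd (idx D d n) (\<lambda>p q. obs_A D V L p q - obs_A D V' L' p q) (2 * hs_dist D V V' + diag_dist D L L')"
  by (rule bnd_lift[OF bij_obs finite_words _ bnd_K_diff[OF assms]])
     (auto simp: obs_A_Kmat hs_dist_nonneg diag_dist_nonneg[OF assms(1)])



lemma words_update: "bs \<in> words d n \<Longrightarrow> b < d \<Longrightarrow> bs[k := b] \<in> words d n"
  using set_update_subsetI[of bs "{..<d}" b k] unfolding words_def by auto

lemma words_nth: "bs \<in> words d n \<Longrightarrow> k < n \<Longrightarrow> bs ! k < d"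
proof -
  assume a: "bs \<in> words d n" "k < n"
  then have "bs ! k \<in> set bs" unfolding words_def by (intro nth_mem) auto
  moreover have "set bs \<subseteq> {..<d}" using a unfolding words_def by auto
  ultimately have "bs ! k \<in> {..<d}" by blast
  then show ?thesis by simp
qed

lemma bij_U:
  assumes k: "k < n" and d: "d \<ge> 1"
  shows "bij_betw (\<lambda>(r, j). (j div d, r[k := j mod d])) ({r \<in> words d n. r ! k = 0} \<times> {..<d * D}) (idx D d n)"
proof (rule bij_betw_byWitness[where f'="\<lambda>(a, bs). (bs[k := 0], a * d + bs ! k)"])
  show "\<forall>a\<in>{r \<in> words d n. r ! k = 0} \<times> {..<d * D}.
          (case case a of (r, j) \<Rightarrow> (j div d, r[k := j mod d]) of (a, bs) \<Rightarrow> (bs[k := 0], a * d + bs ! k)) = a"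
  proof
    fix q assume q: "q \<in> {r \<in> words d n. r ! k = 0} \<times> {..<d * D}"
    obtain r j where qq: "q = (r, j)" by (cases q)
    have len: "length r = n" "r ! k = 0" using q qq unfolding words_def by auto
    show "(case case q of (r, j) \<Rightarrow> (j div d, r[k := j mod d]) of (a, bs) \<Rightarrow> (bs[k := 0], a * d + bs ! k)) = q"
      using len k by (simp add: qq list_update_id[of r k, simplified len])
  qed
  show "\<forall>a'\<in>idx D d n. (case case a' of (a, bs) \<Rightarrow> (bs[k := 0], a * d + bs ! k) of (r, j) \<Rightarrow> (j div d, r[k := j mod d])) = a'"
  proof
    fix q assume q: "q \<in> idx D d n"
    obtain a bs where qq: "q = (a, bs)" by (cases q)
    have bs: "bs \<in> words d n" using q qq unfolding idx_def by auto
    then have len: "length bs = n" "bs ! k < d" using words_nth[OF bs k] unfolding words_def by auto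
    have "(a * d + bs ! k) div d = a" "(a * d + bs ! k) mod d = bs ! k"
      using len d by auto
    then show "(case case q of (a, bs) \<Rightarrow> (bs[k := 0], a * d + bs ! k) of (r, j) \<Rightarrow> (j div d, r[k := j mod d])) = q"
      using len k by (simp add: qq)
  qed
  show "(\<lambda>(r, j). (j div d, r[k := j mod d])) ` ({r \<in> words d n. r ! k = 0} \<times> {..<d * D}) \<subseteq> idx D d n"
  proof clarsimp
    fix r j assume r: "r \<in> words d n" and j: "j < d * D"
    have "j div d < D" using j d by (simp add: less_mult_imp_div_less mult.commute)
    moreover have "j mod d < d" using d by simp
    ultimately show "(j div d, r[k := j mod d]) \<in> idx D d n"
      unfolding idx_def using words_update[OF r] by auto
  qed
  show "(\<lambda>(a, bs). (bs[k := 0], a * d + bs ! k)) ` idx D d n \<subseteq> {r \<in> words d n. r ! k = 0} \<times> {..<d * D}"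
  proof clarsimp
    fix a bs assume q: "(a, bs) \<in> idx D d n"
    have bs: "bs \<in> words d n" and a: "a < D" using q unfolding idx_def by auto
    have len: "length bs = n" using bs unfolding words_def by auto
    have b: "bs ! k < d" using words_nth[OF bs k] .
    have "a * d + bs ! k < (a + 1) * d" using b by simp
    also have "\<dots> \<le> D * d" using a by (intro mult_right_mono) auto
    finally have "a * d + bs ! k < d * D" by (simp add: mult.commute)
    then show "bs[k := 0] \<in> words d n \<and> bs[k := 0] ! k = 0 \<and> a * d + bs ! k < d * D"
      using words_update[OF bs, of 0 k] d len k by auto
  qed
qed

lemma UAB_entry:
  assumes k: "k < n" and d: "d \<ge> 1" and r: "r \<in> words d n" "r ! k = 0" and r': "r' \<in> words d n" "r' ! k = 0"
  shows "U_AB d U k (j div d, r[k := j mod d]) (j' div d, r'[k := j' mod d])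
       = (if r = r' then U j j' else 0)"
proof -
  have len: "length r = n" "length r' = n" using r r' unfolding words_def by auto
  have u: "(r[k := j mod d])[k := 0] = r" "(r'[k := j' mod d])[k := 0] = r'"
  proof -
    have "r[k := 0] = r" "r'[k := 0] = r'"
      using list_update_id[of r k] list_update_id[of r' k] r r' by simp_all
    then show "(r[k := j mod d])[k := 0] = r" "(r'[k := j' mod d])[k := 0] = r'" by simp_all
  qed
  have u0: "r[k := 0] = r" "r'[k := 0] = r'"
      using list_update_id[of r k] list_update_id[of r' k] r r' by simp_all
  show ?thesis unfolding U_AB_def using len k by (simp add: u u0)
qed

lemma bnd_UAB:
  assumes "k < n" "d \<ge> 1" "unitary_mat (d * D) U"
  shows "bnd (idx D d n) (U_AB d U k) 1"
  by (rule bnd_lift[OF bij_U[OF assms(1,2)] _ _ bnd_unitary[OF assms(3)]])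
     (auto simp: finite_words UAB_entry[OF assms(1,2)] simp del: U_AB_def)

lemma bnd_UAB_diff:
  assumes "k < n" "d \<ge> 1"
  shows "bnd (idx D d n) (\<lambda>p q. U_AB d U k p q - U_AB d U' k p q) (hs_dist (d * D) U U')"
  by (rule bnd_lift[OF bij_U[OF assms(1,2)] _ _ bnd_hs_dist])
     (auto simp: finite_words UAB_entry[OF assms(1,2)] hs_dist_nonneg simp del: U_AB_def)



lemma vn_cong: "(\<And>p. p \<in> S \<Longrightarrow> f p = g p) \<Longrightarrow> vn S f = vn S g"
  unfolding vn_def by (rule L2_set_cong) auto

lemma omul_gmul: "omul S = gmul S"
  unfolding omul_def gmul_def by (intro ext) simp

lemma app_oid: "finite S \<Longrightarrow> p \<in> S \<Longrightarrow> app S oid x p = x p"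
  unfolding app_def oid_def using sum_if_delta[of S p 1 x] by simp

lemma chain:
  assumes d: "d \<ge> 1" and U: "unitary_mat (d * D) U" "unitary_mat (d * D) U'"
  shows "m \<le> n \<Longrightarrow> bnd (idx D d n) (U_chain D d n U m) 1 \<and>
    (\<forall>x x'. vn (idx D d n) (\<lambda>p. app (idx D d n) (U_chain D d n U m) x p - app (idx D d n) (U_chain D d n U' m) x' p)
       \<le> real m * hs_dist (d * D) U U' * vn (idx D d n) x + vn (idx D d n) (\<lambda>s. x s - x' s))"
proof (induction m)
  case 0
  let ?S = "idx D d n"
  have a: "\<And>x p. p \<in> ?S \<Longrightarrow> app ?S (U_chain D d n U 0) x p = x p"
    by (simp add: app_oid finite_idx)
  have b: "\<And>x p. p \<in> ?S \<Longrightarrow> app ?S (U_chain D d n U' 0) x p = x p"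
    by (simp add: app_oid finite_idx)
  show ?case
  proof
    show "bnd ?S (U_chain D d n U 0) 1" unfolding bnd_def
    proof
      fix x
      have "vn ?S (app ?S (U_chain D d n U 0) x) = vn ?S x" by (rule vn_cong) (rule a)
      then show "vn ?S (app ?S (U_chain D d n U 0) x) \<le> 1 * vn ?S x" by simp
    qed
    show "\<forall>x x'. vn ?S (\<lambda>p. app ?S (U_chain D d n U 0) x p - app ?S (U_chain D d n U' 0) x' p)
       \<le> real 0 * hs_dist (d * D) U U' * vn ?S x + vn ?S (\<lambda>s. x s - x' s)"
    proof (intro allI)
      fix x x'
      have "vn ?S (\<lambda>p. app ?S (U_chain D d n U 0) x p - app ?S (U_chain D d n U' 0) x' p) = vn ?S (\<lambda>s. x s - x' s)"
        by (rule vn_cong) (simp only: a b)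
      then show "vn ?S (\<lambda>p. app ?S (U_chain D d n U 0) x p - app ?S (U_chain D d n U' 0) x' p)
       \<le> real 0 * hs_dist (d * D) U U' * vn ?S x + vn ?S (\<lambda>s. x s - x' s)" by simp
    qed
  qed
next
  case (Suc m)
  let ?S = "idx D d n"
  let ?u = "hs_dist (d * D) U U'"
  have m: "m < n" using Suc.prems by simp
  have IH: "bnd ?S (U_chain D d n U m) 1"
    "\<And>x x'. vn ?S (\<lambda>p. app ?S (U_chain D d n U m) x p - app ?S (U_chain D d n U' m) x' p)
       \<le> real m * ?u * vn ?S x + vn ?S (\<lambda>s. x s - x' s)"
    using Suc.IH m by (simp_all add: less_imp_le)
  have appS: "\<And>V x. app ?S (U_chain D d n V (Suc m)) x = app ?S (U_chain D d n V m) (app ?S (U_AB d V m) x)"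
    by (simp add: omul_gmul app_gmul finite_idx)
  show ?case
  proof
    show "bnd ?S (U_chain D d n U (Suc m)) 1"
      using bnd_gmul[OF finite_idx IH(1) bnd_UAB[OF m d U(1)]] by (simp add: omul_gmul)
    show "\<forall>x x'. vn ?S (\<lambda>p. app ?S (U_chain D d n U (Suc m)) x p - app ?S (U_chain D d n U' (Suc m)) x' p)
       \<le> real (Suc m) * ?u * vn ?S x + vn ?S (\<lambda>s. x s - x' s)"
    proof (intro allI)
      fix x x' :: "nat \<times> nat list \<Rightarrow> complex"
      let ?y = "app ?S (U_AB d U m) x" and ?y' = "app ?S (U_AB d U' m) x'"
      have yx: "vn ?S ?y \<le> vn ?S x" using bndD[OF bnd_UAB[OF m d U(1)], of x] by simp
      have eq: "(\<lambda>s. ?y s - ?y' s) = (\<lambda>p. app ?S (\<lambda>p q. U_AB d U m p q - U_AB d U' m p q) x p + app ?S (U_AB d U' m) (\<lambda>s. x s - x' s) p)"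
        unfolding app_diff_mat app_diff_vec by (rule ext) simp
      have yy: "vn ?S (\<lambda>s. ?y s - ?y' s) \<le> ?u * vn ?S x + vn ?S (\<lambda>s. x s - x' s)"
        unfolding eq
        by (rule order_trans[OF vn_triangle], intro add_mono bndD[OF bnd_UAB_diff[OF m d]],
            rule order_trans[OF bndD[OF bnd_UAB[OF m d U(2)]]], simp)
      have "vn ?S (\<lambda>p. app ?S (U_chain D d n U (Suc m)) x p - app ?S (U_chain D d n U' (Suc m)) x' p)
          \<le> real m * ?u * vn ?S ?y + vn ?S (\<lambda>s. ?y s - ?y' s)"
        unfolding appS by (rule IH(2))
      also have "\<dots> \<le> real m * ?u * vn ?S x + (?u * vn ?S x + vn ?S (\<lambda>s. x s - x' s))"
        using yx yy hs_dist_nonneg[of "d * D" U U'] by (intro add_mono mult_left_mono) auto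
      finally show "vn ?S (\<lambda>p. app ?S (U_chain D d n U (Suc m)) x p - app ?S (U_chain D d n U' (Suc m)) x' p)
       \<le> real (Suc m) * ?u * vn ?S x + vn ?S (\<lambda>s. x s - x' s)"
        by (simp add: algebra_simps)
    qed
  qed
qed



definition chi :: "nat \<Rightarrow> (nat \<Rightarrow> complex) \<Rightarrow> (nat \<Rightarrow> nat \<Rightarrow> complex) \<Rightarrow> nat \<Rightarrow> nat \<times> nat list \<Rightarrow> complex" where
  "chi n z W i = (\<lambda>(a, bs). W a i * (\<Prod>k<n. z (bs ! k)))"

lemma init_state_chi:
  "init_state D n \<omega> z W = (\<lambda>p q. \<Sum>i<D. complex_of_real (\<omega> i) * chi n z W i p * cnj (chi n z W i q))"
  unfolding init_state_def chi_def
  by (intro ext) (auto simp: sum_distrib_left sum_distrib_right prod.distrib cnj_prod mult_ac intro!: sum.cong)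

lemma omul_rank:
  assumes "finite S" "finite I"
  shows "omul S A (\<lambda>s q. \<Sum>i\<in>I. c i * x i s * y i q) = (\<lambda>p q. \<Sum>i\<in>I. c i * app S A (x i) p * y i q)"
proof (intro ext)
  fix p q
  have "omul S A (\<lambda>s q. \<Sum>i\<in>I. c i * x i s * y i q) p q = (\<Sum>s\<in>S. \<Sum>i\<in>I. A p s * (c i * x i s * y i q))"
    unfolding omul_def by (simp add: sum_distrib_left)
  also have "\<dots> = (\<Sum>i\<in>I. \<Sum>s\<in>S. A p s * (c i * x i s * y i q))" by (rule sum.swap)
  also have "\<dots> = (\<Sum>i\<in>I. c i * app S A (x i) p * y i q)"
    unfolding app_def by (intro sum.cong refl) (simp add: sum_distrib_left sum_distrib_right mult_ac)
  finally show "omul S A (\<lambda>s q. \<Sum>i\<in>I. c i * x i s * y i q) p q = (\<Sum>i\<in>I. c i * app S A (x i) p * y i q)" .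
qed

lemma omul_adj:
  assumes "finite S" "finite I"
  shows "omul S (\<lambda>s s'. \<Sum>i\<in>I. c i * x i s * cnj (x i s')) (oadj P) = (\<lambda>s q. \<Sum>i\<in>I. c i * x i s * cnj (app S P (x i) q))"
proof (intro ext)
  fix s q
  have "omul S (\<lambda>s s'. \<Sum>i\<in>I. c i * x i s * cnj (x i s')) (oadj P) s q
      = (\<Sum>s'\<in>S. \<Sum>i\<in>I. c i * x i s * cnj (x i s') * cnj (P q s'))"
    unfolding omul_def oadj_def by (simp add: sum_distrib_right)
  also have "\<dots> = (\<Sum>i\<in>I. \<Sum>s'\<in>S. c i * x i s * cnj (x i s') * cnj (P q s'))" by (rule sum.swap)
  also have "\<dots> = (\<Sum>i\<in>I. c i * x i s * cnj (app S P (x i) q))"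
    unfolding app_def by (intro sum.cong refl) (simp add: sum_distrib_left mult_ac)
  finally show "omul S (\<lambda>s s'. \<Sum>i\<in>I. c i * x i s * cnj (x i s')) (oadj P) s q = (\<Sum>i\<in>I. c i * x i s * cnj (app S P (x i) q))" .
qed

definition psi where
  "psi d D n z U W i = app (idx D d n) (U_chain D d n U n) (chi n z W i)"
definition phi where
  "phi d D n z U V W L i = app (idx D d n) (obs_A D V L) (psi d D n z U W i)"

lemma full_op_eq:
  "full_op d D n \<omega> z U V W L = (\<lambda>p q. \<Sum>i<D. complex_of_real (\<omega> i) * phi d D n z U V W L i p * cnj (psi d D n z U W i q))"
  unfolding full_op_def Let_def init_state_chi
  by (simp add: omul_adj omul_rank finite_idx phi_def psi_def)



lemma sum_prod_split: "(\<Sum>s\<in>A \<times> B. F s) = (\<Sum>a\<in>A. \<Sum>b\<in>B. F (a, b))"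
  by (simp add: sum.cartesian_product)

lemma words_Suc: "words d (Suc n) = (\<lambda>(b, bs). b # bs) ` ({..<d} \<times> words d n)"
proof
  show "words d (Suc n) \<subseteq> (\<lambda>(b, bs). b # bs) ` ({..<d} \<times> words d n)"
  proof
    fix xs assume xs: "xs \<in> words d (Suc n)"
    then obtain y ys where "xs = y # ys" "length ys = n" unfolding words_def by (auto simp: length_Suc_conv)
    then show "xs \<in> (\<lambda>(b, bs). b # bs) ` ({..<d} \<times> words d n)" using xs unfolding words_def by force
  qed
  show "(\<lambda>(b, bs). b # bs) ` ({..<d} \<times> words d n) \<subseteq> words d (Suc n)"
    unfolding words_def by auto
qed

lemma sum_words_prod: fixes f :: "nat \<Rightarrow> real" shows "(\<Sum>bs\<in>words d n. \<Prod>k<n. f (bs ! k)) = (\<Sum>b<d. f b) ^ n"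
proof (induction n)
  case 0
  have "words d 0 = {[]}" unfolding words_def by auto
  then show ?case by simp
next
  case (Suc n)
  have inj: "inj_on (\<lambda>(b, bs). b # bs) ({..<d} \<times> words d n)" by (auto simp: inj_on_def)
  have "(\<Sum>bs\<in>words d (Suc n). \<Prod>k<Suc n. f (bs ! k))
      = (\<Sum>q\<in>{..<d} \<times> words d n. \<Prod>k<Suc n. f ((case q of (b, bs) \<Rightarrow> b # bs) ! k))"
    by (subst words_Suc, subst sum.reindex[OF inj]) (simp add: o_def case_prod_beta')
  also have "\<dots> = (\<Sum>b<d. \<Sum>bs\<in>words d n. f b * (\<Prod>k<n. f (bs ! k)))"
    unfolding sum_prod_split by (simp del: prod.lessThan_Suc add: prod.lessThan_Suc_shift)
  also have "\<dots> = (\<Sum>b<d. f b) * (\<Sum>bs\<in>words d n. \<Prod>k<n. f (bs ! k))"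
    by (simp add: sum_product)
  also have "\<dots> = (\<Sum>b<d. f b) ^ Suc n" using Suc.IH by simp
  finally show ?case .
qed

lemma vn_tensor:
  assumes z: "(\<Sum>k<d. (cmod (z k))\<^sup>2) = 1"
  shows "(vn (idx D d n) (\<lambda>(a, bs). g a * (\<Prod>k<n. z (bs ! k))))\<^sup>2 = (\<Sum>a<D. (cmod (g a))\<^sup>2)"
proof -
  have "(vn (idx D d n) (\<lambda>(a, bs). g a * (\<Prod>k<n. z (bs ! k))))\<^sup>2
     = (\<Sum>a<D. \<Sum>bs\<in>words d n. (cmod (g a))\<^sup>2 * (\<Prod>k<n. (cmod (z (bs ! k)))\<^sup>2))"
    unfolding vn_sq idx_def sum_prod_split
    by (simp add: norm_mult power_mult_distrib prod_norm[symmetric] prod_power_distrib)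
  also have "\<dots> = (\<Sum>a<D. (cmod (g a))\<^sup>2 * (\<Sum>bs\<in>words d n. \<Prod>k<n. (cmod (z (bs ! k)))\<^sup>2))"
    by (simp add: sum_distrib_left)
  also have "\<dots> = (\<Sum>a<D. (cmod (g a))\<^sup>2)"
    by (simp add: sum_words_prod[of "\<lambda>b. (cmod (z b))\<^sup>2"] z)
  finally show ?thesis .
qed

lemma unitary_col: "unitary_mat D W \<Longrightarrow> i < D \<Longrightarrow> (\<Sum>a<D. (cmod (W a i))\<^sup>2) = 1"
proof -
  assume W: "unitary_mat D W" and i: "i < D"
  have "(\<Sum>a<D. cnj (W a i) * W a i) = 1" using W i unfolding unitary_mat_def by auto
  then have "complex_of_real (\<Sum>a<D. (cmod (W a i))\<^sup>2) = 1"
    by (simp only: of_real_sum_sq mult.commute[of "W _ i"])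
  then show ?thesis by (metis of_real_eq_1_iff)
qed

lemma chi_alt: "chi n z W i = (\<lambda>(a, bs). W a i * (\<Prod>k<n. z (bs ! k)))"
  by (simp add: chi_def)

lemma vn_chi:
  assumes "(\<Sum>k<d. (cmod (z k))\<^sup>2) = 1" "unitary_mat D W" "i < D"
  shows "vn (idx D d n) (chi n z W i) = 1"
proof -
  have "(vn (idx D d n) (chi n z W i))\<^sup>2 = 1"
    unfolding chi_alt vn_tensor[OF assms(1)] using unitary_col[OF assms(2,3)] .
  then show ?thesis using vn_nonneg by (metis abs_of_nonneg power2_eq_1_iff abs_1 real_sqrt_abs real_sqrt_one)
qed

lemma vn_chi_diff:
  assumes "(\<Sum>k<d. (cmod (z k))\<^sup>2) = 1" "i < D"
  shows "vn (idx D d n) (\<lambda>s. chi n z W i s - chi n z W' i s) \<le> hs_dist D W W'"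
proof -
  have eq: "(\<lambda>s. chi n z W i s - chi n z W' i s) = (\<lambda>(a, bs). (W a i - W' a i) * (\<Prod>k<n. z (bs ! k)))"
    unfolding chi_def by (auto simp: algebra_simps)
  have "(vn (idx D d n) (\<lambda>s. chi n z W i s - chi n z W' i s))\<^sup>2 = (\<Sum>a<D. (cmod (W a i - W' a i))\<^sup>2)"
    unfolding eq vn_tensor[OF assms(1)] ..
  also have "\<dots> \<le> (\<Sum>a<D. \<Sum>j<D. (cmod (W a j - W' a j))\<^sup>2)"
    by (intro sum_mono member_le_sum) (use assms(2) in auto)
  also have "\<dots> = (hs_dist D W W')\<^sup>2" unfolding hs_dist_def by (simp add: sum_nonneg)
  finally show ?thesis by (rule power2_le_imp_le[OF _ hs_dist_nonneg])
qed



locale setting =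
  fixes d D n :: nat and z :: "nat \<Rightarrow> complex" and U V W U' V' W' :: "nat \<Rightarrow> nat \<Rightarrow> complex"
    and L L' :: "nat \<Rightarrow> real"
  assumes d: "d \<ge> 1" and D: "D \<ge> 1" and z: "(\<Sum>k<d. (cmod (z k))\<^sup>2) = 1"
    and X: "in_X d D U V W L" "in_X d D U' V' W' L'"
begin

abbreviation "S \<equiv> idx D d n"
abbreviation "u \<equiv> hs_dist (d * D) U U'"
abbreviation "v \<equiv> hs_dist D V V'"
abbreviation "w \<equiv> hs_dist D W W'"
abbreviation "lam \<equiv> diag_dist D L L'"

lemma UU: "unitary_mat (d * D) U" "unitary_mat (d * D) U'" using X unfolding in_X_def by auto
lemma VV: "unitary_mat D V" "unitary_mat D V'" using X unfolding in_X_def by auto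
lemma WW: "unitary_mat D W" "unitary_mat D W'" using X unfolding in_X_def by auto
lemma LL: "\<And>i. i < D \<Longrightarrow> 0 \<le> L i \<and> L i \<le> 1" "\<And>i. i < D \<Longrightarrow> 0 \<le> L' i \<and> L' i \<le> 1"
  using X unfolding in_X_def by auto

lemma psi_le: "i < D \<Longrightarrow> vn S (psi d D n z U W i) \<le> 1"
  using bndD[OF conjunct1[OF chain[OF d UU, of n n]], of "chi n z W i"] vn_chi[OF z WW(1)]
  unfolding psi_def by simp

lemma psi'_le: "i < D \<Longrightarrow> vn S (psi d D n z U' W' i) \<le> 1"
  using bndD[OF conjunct1[OF chain[OF d UU(2) UU(1), of n n]], of "chi n z W' i"] vn_chi[OF z WW(2)]
  unfolding psi_def by simp

lemma psi_diff: "i < D \<Longrightarrow> vn S (\<lambda>p. psi d D n z U W i p - psi d D n z U' W' i p) \<le> real n * u + w"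
proof -
  assume i: "i < D"
  have "vn S (\<lambda>p. psi d D n z U W i p - psi d D n z U' W' i p)
     \<le> real n * u * vn S (chi n z W i) + vn S (\<lambda>s. chi n z W i s - chi n z W' i s)"
    using conjunct2[OF chain[OF d UU, of n n]] unfolding psi_def by blast
  also have "\<dots> \<le> real n * u * 1 + w"
    using vn_chi[OF z WW(1) i] vn_chi_diff[OF z i] by simp
  finally show ?thesis by simp
qed

lemma phi_le: "i < D \<Longrightarrow> vn S (phi d D n z U V W L i) \<le> 1"
  using bndD[OF bnd_obs[where d=d and n=n, OF VV(1) LL(1)], where x="psi d D n z U W i"] psi_le
  unfolding phi_def by fastforce

lemma phi'_le: "i < D \<Longrightarrow> vn S (phi d D n z U' V' W' L' i) \<le> 1"
  using bndD[OF bnd_obs[where d=d and n=n, OF VV(2) LL(2)], where x="psi d D n z U' W' i"] psi'_le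
  unfolding phi_def by fastforce

lemma phi_diff: "i < D \<Longrightarrow> vn S (\<lambda>p. phi d D n z U V W L i p - phi d D n z U' V' W' L' i p)
   \<le> 2 * v + lam + (real n * u + w)"
proof -
  assume i: "i < D"
  let ?y = "psi d D n z U W i" and ?y' = "psi d D n z U' W' i"
  have eq: "(\<lambda>p. phi d D n z U V W L i p - phi d D n z U' V' W' L' i p)
    = (\<lambda>p. app S (\<lambda>p q. obs_A D V L p q - obs_A D V' L' p q) ?y p + app S (obs_A D V' L') (\<lambda>s. ?y s - ?y' s) p)"
    unfolding phi_def app_diff_mat app_diff_vec by (rule ext) simp
  have "vn S (\<lambda>p. phi d D n z U V W L i p - phi d D n z U' V' W' L' i p)
      \<le> vn S (app S (\<lambda>p q. obs_A D V L p q - obs_A D V' L' p q) ?y) + vn S (app S (obs_A D V' L') (\<lambda>s. ?y s - ?y' s))"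
    unfolding eq by (rule vn_triangle)
  also have "\<dots> \<le> (2 * v + lam) * vn S ?y + 1 * vn S (\<lambda>s. ?y s - ?y' s)"
    by (intro add_mono bndD[OF bnd_obs_diff[OF D VV LL]] bndD[OF bnd_obs[OF VV(2) LL(2)]])
  also have "\<dots> \<le> (2 * v + lam) * 1 + 1 * (real n * u + w)"
    using psi_le[OF i] psi_diff[OF i] hs_dist_nonneg[of D V V'] diag_dist_nonneg[OF D, of L L']
    by (intro add_mono mult_left_mono) auto
  finally show ?thesis by simp
qed

end



definition mn :: "'c set \<Rightarrow> 'r set \<Rightarrow> ('c \<Rightarrow> 'r \<Rightarrow> complex) \<Rightarrow> real" where
  "mn C R A = vn (C \<times> R) (\<lambda>(c, r). A c r)"

definition pr :: "'r set \<Rightarrow> ('c \<Rightarrow> 'r \<Rightarrow> complex) \<Rightarrow> ('c \<Rightarrow> 'r \<Rightarrow> complex) \<Rightarrow> 'c \<Rightarrow> 'c \<Rightarrow> complex" where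
  "pr R A B = (\<lambda>c c'. \<Sum>r\<in>R. A c r * cnj (B c' r))"

lemma mn_sq: "finite C \<Longrightarrow> finite R \<Longrightarrow> (mn C R A)\<^sup>2 = (\<Sum>c\<in>C. (vn R (A c))\<^sup>2)"
  unfolding mn_def vn_sq sum_prod_split by simp

lemma mn_nonneg: "0 \<le> mn C R A" by (simp add: mn_def)

lemma hn_pr: assumes "finite C" "finite R" shows "mn C C (pr R A B) \<le> mn C R A * mn C R B"
proof -
  have "(mn C C (pr R A B))\<^sup>2 = (\<Sum>c\<in>C. \<Sum>c'\<in>C. (cmod (\<Sum>r\<in>R. A c r * cnj (B c' r)))\<^sup>2)"
    unfolding mn_def vn_sq pr_def sum_prod_split by simp
  also have "\<dots> \<le> (\<Sum>c\<in>C. \<Sum>c'\<in>C. (vn R (A c))\<^sup>2 * (vn R (B c'))\<^sup>2)"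
    by (intro sum_mono) (simp add: power_mult_distrib[symmetric] power_mono cs_ineq_cnj)
  also have "\<dots> = (mn C R A * mn C R B)\<^sup>2"
    by (simp add: power_mult_distrib mn_sq assms sum_product)
  finally show ?thesis by (rule power2_le_imp_le[OF _ mult_nonneg_nonneg[OF mn_nonneg mn_nonneg]])
qed

lemma vn_sum: "finite I \<Longrightarrow> vn X (\<lambda>s. \<Sum>i\<in>I. f i s) \<le> (\<Sum>i\<in>I. vn X (f i))"
proof (induction I rule: finite_induct)
  case empty
  then show ?case by (simp add: vn_def L2_set_def)
next
  case (insert j I)
  have "vn X (\<lambda>s. \<Sum>i\<in>insert j I. f i s) = vn X (\<lambda>s. f j s + (\<Sum>i\<in>I. f i s))"
    using insert by simp
  also have "\<dots> \<le> vn X (f j) + vn X (\<lambda>s. \<Sum>i\<in>I. f i s)" by (rule vn_triangle)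
  also have "\<dots> \<le> vn X (f j) + (\<Sum>i\<in>I. vn X (f i))" using insert by simp
  finally show ?case using insert by simp
qed

lemma pr_diff: "(\<lambda>c c'. pr R A B c c' - pr R A' B' c c') =
   (\<lambda>c c'. pr R (\<lambda>c r. A c r - A' c r) B c c' + pr R A' (\<lambda>c r. B c r - B' c r) c c')"
  unfolding pr_def by (intro ext) (simp add: sum_subtractf[symmetric] sum.distrib[symmetric] algebra_simps)

lemma mn_diff_pr:
  assumes "finite C" "finite R" "mn C R B \<le> 1" "mn C R A' \<le> 1"
  shows "mn C C (\<lambda>c c'. pr R A B c c' - pr R A' B' c c')
     \<le> mn C R (\<lambda>c r. A c r - A' c r) + mn C R (\<lambda>c r. B c r - B' c r)"
proof -
  have "mn C C (\<lambda>c c'. pr R A B c c' - pr R A' B' c c')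
      \<le> mn C C (pr R (\<lambda>c r. A c r - A' c r) B) + mn C C (pr R A' (\<lambda>c r. B c r - B' c r))"
    unfolding pr_diff mn_def by (simp add: case_prod_beta' vn_triangle)
  also have "\<dots> \<le> mn C R (\<lambda>c r. A c r - A' c r) * mn C R B + mn C R A' * mn C R (\<lambda>c r. B c r - B' c r)"
    by (intro add_mono hn_pr assms)
  also have "\<dots> \<le> mn C R (\<lambda>c r. A c r - A' c r) * 1 + 1 * mn C R (\<lambda>c r. B c r - B' c r)"
    by (intro add_mono mult_left_mono mult_right_mono assms mn_nonneg)
  finally show ?thesis by simp
qed



lemma tr_pr: assumes "finite C" "finite R"
  shows "cmod (\<Sum>c\<in>C. pr R X Y c c) \<le> mn C R X * mn C R Y"
proof -
  have "(\<Sum>c\<in>C. pr R X Y c c) = (\<Sum>q\<in>C \<times> R. (\<lambda>(c, r). X c r) q * cnj ((\<lambda>(c, r). Y c r) q))"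
    unfolding pr_def sum_prod_split by simp
  then show ?thesis unfolding mn_def by (simp only: cs_ineq_cnj)
qed

lemma vn_swap: "vn (C \<times> C) (\<lambda>(c, c'). f c' c) = vn (C \<times> C) (\<lambda>(c, c'). f c c')"
  unfolding vn_def L2_set_def sum_prod_split by (subst sum.swap) simp

lemma G_diff:
  fixes \<rho> \<rho>' :: "'c \<Rightarrow> 'c \<Rightarrow> complex"
  shows "cmod ((\<Sum>c\<in>C. \<Sum>c'\<in>C. \<rho> c c' * \<rho> c' c) - (\<Sum>c\<in>C. \<Sum>c'\<in>C. \<rho>' c c' * \<rho>' c' c))
    \<le> mn C C (\<lambda>c c'. \<rho> c c' - \<rho>' c c') * (mn C C \<rho> + mn C C \<rho>')"
proof -
  have eq: "(\<Sum>c\<in>C. \<Sum>c'\<in>C. \<rho> c c' * \<rho> c' c) - (\<Sum>c\<in>C. \<Sum>c'\<in>C. \<rho>' c c' * \<rho>' c' c)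
    = (\<Sum>q\<in>C \<times> C. (\<lambda>(c, c'). \<rho> c c' - \<rho>' c c') q * (\<lambda>(c, c'). \<rho> c' c) q)
      + (\<Sum>q\<in>C \<times> C. (\<lambda>(c, c'). \<rho>' c c') q * (\<lambda>(c, c'). \<rho> c' c - \<rho>' c' c) q)"
  proof -
    have 1: "(\<Sum>c\<in>C. \<Sum>c'\<in>C. \<rho> c c' * \<rho> c' c) - (\<Sum>c\<in>C. \<Sum>c'\<in>C. \<rho>' c c' * \<rho>' c' c)
       = (\<Sum>c\<in>C. \<Sum>c'\<in>C. \<rho> c c' * \<rho> c' c - \<rho>' c c' * \<rho>' c' c)"
      by (simp only: sum_subtractf)
    have 2: "(\<Sum>q\<in>C \<times> C. (\<lambda>(c, c'). \<rho> c c' - \<rho>' c c') q * (\<lambda>(c, c'). \<rho> c' c) q)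
      + (\<Sum>q\<in>C \<times> C. (\<lambda>(c, c'). \<rho>' c c') q * (\<lambda>(c, c'). \<rho> c' c - \<rho>' c' c) q)
      = (\<Sum>c\<in>C. \<Sum>c'\<in>C. \<rho> c c' * \<rho> c' c - \<rho>' c c' * \<rho>' c' c)"
      unfolding sum.distrib[symmetric] sum_prod_split by (intro sum.cong refl) (simp add: algebra_simps)
    show ?thesis unfolding 1 2 ..
  qed
  have "cmod (\<dots>) \<le> mn C C (\<lambda>c c'. \<rho> c c' - \<rho>' c c') * mn C C \<rho>
        + mn C C \<rho>' * mn C C (\<lambda>c c'. \<rho> c c' - \<rho>' c c')"
  proof (rule order_trans[OF norm_triangle_ineq], rule add_mono)
    show "cmod (\<Sum>q\<in>C \<times> C. (\<lambda>(c, c'). \<rho> c c' - \<rho>' c c') q * (\<lambda>(c, c'). \<rho> c' c) q)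
       \<le> mn C C (\<lambda>c c'. \<rho> c c' - \<rho>' c c') * mn C C \<rho>"
      using cs_ineq[where A="C \<times> C" and x="\<lambda>(c, c'). \<rho> c c' - \<rho>' c c'" and y="\<lambda>(c, c'). \<rho> c' c"]
      unfolding mn_def vn_swap[of C \<rho>] by simp
    show "cmod (\<Sum>q\<in>C \<times> C. (\<lambda>(c, c'). \<rho>' c c') q * (\<lambda>(c, c'). \<rho> c' c - \<rho>' c' c) q)
       \<le> mn C C \<rho>' * mn C C (\<lambda>c c'. \<rho> c c' - \<rho>' c c')"
      using cs_ineq[where A="C \<times> C" and x="\<lambda>(c, c'). \<rho>' c c'" and y="\<lambda>(c, c'). \<rho> c' c - \<rho>' c' c"]
      unfolding mn_def vn_swap[of C "\<lambda>c c'. \<rho> c c' - \<rho>' c c'"] by simp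
  qed
  then show ?thesis unfolding eq by (simp add: algebra_simps)
qed



lemma swap3: "(\<Sum>i\<in>I. \<Sum>a\<in>A. \<Sum>x\<in>X. \<Sum>y\<in>Y. f i a x y) = (\<Sum>a\<in>A. \<Sum>x\<in>X. \<Sum>y\<in>Y. \<Sum>i\<in>I. f i a x y)"
proof -
  have "(\<Sum>i\<in>I. \<Sum>a\<in>A. \<Sum>x\<in>X. \<Sum>y\<in>Y. f i a x y) = (\<Sum>a\<in>A. \<Sum>i\<in>I. \<Sum>x\<in>X. \<Sum>y\<in>Y. f i a x y)"
    by (rule sum.swap)
  also have "\<dots> = (\<Sum>a\<in>A. \<Sum>x\<in>X. \<Sum>i\<in>I. \<Sum>y\<in>Y. f i a x y)"
    by (rule sum.cong[OF refl], rule sum.swap)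
  also have "\<dots> = (\<Sum>a\<in>A. \<Sum>x\<in>X. \<Sum>y\<in>Y. \<Sum>i\<in>I. f i a x y)"
    by (rule sum.cong[OF refl], rule sum.cong[OF refl], rule sum.swap)
  finally show ?thesis .
qed

lemma wsum_bound:
  fixes \<omega> :: "nat \<Rightarrow> real" and X :: "nat \<Rightarrow> complex"
  assumes "\<forall>i<D. \<omega> i \<ge> 0" "(\<Sum>i<D. \<omega> i) = 1" "\<And>i. i < D \<Longrightarrow> cmod (X i) \<le> b"
  shows "cmod (\<Sum>i<D. complex_of_real (\<omega> i) * X i) \<le> b"
proof -
  have "cmod (\<Sum>i<D. complex_of_real (\<omega> i) * X i) \<le> (\<Sum>i<D. \<omega> i * cmod (X i))"
    by (rule order_trans[OF norm_sum]) (use assms(1) in \<open>simp add: norm_mult\<close>)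
  also have "\<dots> \<le> (\<Sum>i<D. \<omega> i * b)"
    using assms(1,3) by (intro sum_mono mult_left_mono) auto
  also have "\<dots> = b" using assms(2) by (simp add: sum_distrib_right[symmetric])
  finally show ?thesis .
qed

lemma wsum_mn:
  fixes \<omega> :: "nat \<Rightarrow> real"
  assumes "\<forall>i<D. \<omega> i \<ge> 0" "(\<Sum>i<D. \<omega> i) = 1" "\<And>i. i < D \<Longrightarrow> mn C C (F i) \<le> b"
  shows "mn C C (\<lambda>c c'. \<Sum>i<D. complex_of_real (\<omega> i) * F i c c') \<le> b"
proof -
  have "mn C C (\<lambda>c c'. \<Sum>i<D. complex_of_real (\<omega> i) * F i c c')
     = vn (C \<times> C) (\<lambda>q. \<Sum>i<D. complex_of_real (\<omega> i) * (\<lambda>(c, c'). F i c c') q)"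
    unfolding mn_def by (simp add: case_prod_beta')
  also have "\<dots> \<le> (\<Sum>i<D. vn (C \<times> C) (\<lambda>q. complex_of_real (\<omega> i) * (\<lambda>(c, c'). F i c c') q))"
    by (rule vn_sum) simp
  also have "\<dots> = (\<Sum>i<D. \<omega> i * mn C C (F i))"
    unfolding vn_scale mn_def using assms(1) by (intro sum.cong refl) auto
  also have "\<dots> \<le> (\<Sum>i<D. \<omega> i * b)"
    using assms(1,3) by (intro sum_mono mult_left_mono) auto
  also have "\<dots> = b" using assms(2) by (simp add: sum_distrib_right[symmetric])
  finally show ?thesis .
qed

locale setting2 = setting +
  fixes t l :: nat and \<omega> :: "nat \<Rightarrow> real"
  assumes n_def: "n = 2 * t + l" and om: "\<forall>i<D. \<omega> i \<ge> 0" "(\<Sum>i<D. \<omega> i) = 1"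
begin

abbreviation "C \<equiv> words d l"
abbreviation "R \<equiv> {..<D} \<times> words d t \<times> words d t"

definition pi :: "nat list \<Rightarrow> nat \<times> nat list \<times> nat list \<Rightarrow> nat \<times> nat list" where
  "pi cs r = (case r of (a, xs, ys) \<Rightarrow> (a, xs @ cs @ ys))"

definition "A i = (\<lambda>cs r. phi d D n z U V W L i (pi cs r))"
definition "B i = (\<lambda>cs r. psi d D n z U W i (pi cs r))"
definition "A' i = (\<lambda>cs r. phi d D n z U' V' W' L' i (pi cs r))"
definition "B' i = (\<lambda>cs r. psi d D n z U' W' i (pi cs r))"

lemma finC: "finite C" by (rule finite_words)
lemma finR: "finite R" by (simp add: finite_words)

lemma rho_eq_gen:
  "rho_l d D t l \<omega> z U0 V0 W0 L0 = (\<lambda>cs cs'. \<Sum>i<D. complex_of_real (\<omega> i) *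
     pr R (\<lambda>cs r. phi d D n z U0 V0 W0 L0 i (pi cs r)) (\<lambda>cs r. psi d D n z U0 W0 i (pi cs r)) cs cs')"
proof (intro ext)
  fix cs cs'
  show "rho_l d D t l \<omega> z U0 V0 W0 L0 cs cs' = (\<Sum>i<D. complex_of_real (\<omega> i) *
     pr R (\<lambda>cs r. phi d D n z U0 V0 W0 L0 i (pi cs r)) (\<lambda>cs r. psi d D n z U0 W0 i (pi cs r)) cs cs')"
  proof -
    have "(\<Sum>i<D. complex_of_real (\<omega> i) *
     pr R (\<lambda>cs r. phi d D n z U0 V0 W0 L0 i (pi cs r)) (\<lambda>cs r. psi d D n z U0 W0 i (pi cs r)) cs cs')
      = (\<Sum>i<D. \<Sum>a<D. \<Sum>xs\<in>words d t. \<Sum>ys\<in>words d t. complex_of_real (\<omega> i) *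
           (phi d D n z U0 V0 W0 L0 i (a, xs @ cs @ ys) * cnj (psi d D n z U0 W0 i (a, xs @ cs' @ ys))))"
      unfolding pr_def sum_prod_split pi_def by (simp add: sum_distrib_left)
    also have "\<dots> = (\<Sum>a<D. \<Sum>xs\<in>words d t. \<Sum>ys\<in>words d t. \<Sum>i<D. complex_of_real (\<omega> i) *
           (phi d D n z U0 V0 W0 L0 i (a, xs @ cs @ ys) * cnj (psi d D n z U0 W0 i (a, xs @ cs' @ ys))))"
      by (rule swap3)
    also have "\<dots> = rho_l d D t l \<omega> z U0 V0 W0 L0 cs cs'"
      unfolding rho_l_def Let_def n_def[symmetric] full_op_eq by (simp add: mult.assoc)
    finally show ?thesis by simp
  qed
qed

lemma rho_eq: "rho_l d D t l \<omega> z U V W L = (\<lambda>cs cs'. \<Sum>i<D. complex_of_real (\<omega> i) * pr R (A i) (B i) cs cs')"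
  unfolding A_def B_def by (rule rho_eq_gen)

lemma rho_eq': "rho_l d D t l \<omega> z U' V' W' L' = (\<lambda>cs cs'. \<Sum>i<D. complex_of_real (\<omega> i) * pr R (A' i) (B' i) cs cs')"
  unfolding A'_def B'_def by (rule rho_eq_gen)

lemma inj_pi: "inj_on (\<lambda>(c, r). pi c r) (C \<times> R)"
proof (rule inj_onI, clarsimp simp: pi_def)
  fix c a xs ys c' xs' ys'
  assume "c \<in> C" "xs \<in> words d t" "ys \<in> words d t" "c' \<in> C" "xs' \<in> words d t" "ys' \<in> words d t"
    and eq: "xs @ c @ ys = xs' @ c' @ ys'"
  then have len: "length c = l" "length c' = l" "length xs = t" "length xs' = t" unfolding words_def by auto
  then have "xs = xs' \<and> c @ ys = c' @ ys'" using eq by (simp add: append_eq_append_conv)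
  then show "c = c' \<and> xs = xs' \<and> ys = ys'" using len by (simp add: append_eq_append_conv)
qed

lemma img_pi: "(\<lambda>(c, r). pi c r) ` (C \<times> R) \<subseteq> S"
  unfolding idx_def pi_def words_def by (auto simp: n_def)

lemma mn_le: "mn C R (\<lambda>c r. F (pi c r)) \<le> vn S F"
proof -
  have "mn C R (\<lambda>c r. F (pi c r)) = vn (C \<times> R) (\<lambda>q. F ((\<lambda>(c, r). pi c r) q))"
    unfolding mn_def by (simp add: case_prod_beta')
  also have "\<dots> \<le> vn S F" by (rule vn_mono_inj[OF inj_pi img_pi finite_idx])
  finally show ?thesis .
qed

abbreviation "E \<equiv> 2 * v + lam + 2 * (real n * u + w)"

lemma mnA: "i < D \<Longrightarrow> mn C R (A i) \<le> 1" unfolding A_def using mn_le phi_le order_trans by blast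
lemma mnB: "i < D \<Longrightarrow> mn C R (B i) \<le> 1" unfolding B_def using mn_le psi_le order_trans by blast
lemma mnA': "i < D \<Longrightarrow> mn C R (A' i) \<le> 1" unfolding A'_def using mn_le phi'_le order_trans by blast
lemma mnB': "i < D \<Longrightarrow> mn C R (B' i) \<le> 1" unfolding B'_def using mn_le psi'_le order_trans by blast

lemma mnAd: "i < D \<Longrightarrow> mn C R (\<lambda>c r. A i c r - A' i c r) \<le> 2 * v + lam + (real n * u + w)"
  unfolding A_def A'_def
  using mn_le[of "\<lambda>p. phi d D n z U V W L i p - phi d D n z U' V' W' L' i p"] phi_diff order_trans by blast
lemma mnBd: "i < D \<Longrightarrow> mn C R (\<lambda>c r. B i c r - B' i c r) \<le> real n * u + w"
  unfolding B_def B'_def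
  using mn_le[of "\<lambda>p. psi d D n z U W i p - psi d D n z U' W' i p"] psi_diff order_trans by blast

lemma e_bound: "i < D \<Longrightarrow> mn C R (\<lambda>c r. A i c r - A' i c r) + mn C R (\<lambda>c r. B i c r - B' i c r) \<le> E"
  using mnAd mnBd by fastforce

end



context setting2 begin

abbreviation "rho \<equiv> rho_l d D t l \<omega> z U V W L"
abbreviation "rho' \<equiv> rho_l d D t l \<omega> z U' V' W' L'"

lemma E_nonneg: "0 \<le> E"
  using hs_dist_nonneg[of D V V'] hs_dist_nonneg[of "d * D" U U'] hs_dist_nonneg[of D W W']
    diag_dist_nonneg[OF D, of L L'] by simp

lemma pr_diag_diff: "pr R X Y c c - pr R X' Y' c c = pr R (\<lambda>c r. X c r - X' c r) Y c c + pr R X' (\<lambda>c r. Y c r - Y' c r) c c"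
  using pr_diff[of R X Y X' Y'] by meson

lemma T_diff: "i < D \<Longrightarrow> cmod ((\<Sum>c\<in>C. pr R (A i) (B i) c c) - (\<Sum>c\<in>C. pr R (A' i) (B' i) c c)) \<le> E"
proof -
  assume i: "i < D"
  have eq: "(\<Sum>c\<in>C. pr R (A i) (B i) c c) - (\<Sum>c\<in>C. pr R (A' i) (B' i) c c)
     = (\<Sum>c\<in>C. pr R (\<lambda>c r. A i c r - A' i c r) (B i) c c) + (\<Sum>c\<in>C. pr R (A' i) (\<lambda>c r. B i c r - B' i c r) c c)"
    by (simp only: sum_subtractf[symmetric] pr_diag_diff sum.distrib)
  have "cmod (\<dots>) \<le> mn C R (\<lambda>c r. A i c r - A' i c r) * mn C R (B i) + mn C R (A' i) * mn C R (\<lambda>c r. B i c r - B' i c r)"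
    by (rule order_trans[OF norm_triangle_ineq add_mono[OF tr_pr[OF finC finR] tr_pr[OF finC finR]]])
  also have "\<dots> \<le> mn C R (\<lambda>c r. A i c r - A' i c r) * 1 + 1 * mn C R (\<lambda>c r. B i c r - B' i c r)"
    by (intro add_mono mult_left_mono mult_right_mono mnB[OF i] mnA'[OF i] mn_nonneg)
  also have "\<dots> \<le> E" using e_bound[OF i] by simp
  finally show ?thesis unfolding eq .
qed

lemma T_le: "i < D \<Longrightarrow> cmod (\<Sum>c\<in>C. pr R (A i) (B i) c c) \<le> 1"
proof -
  assume i: "i < D"
  have "mn C R (A i) * mn C R (B i) \<le> 1" by (rule mult_le_one[OF mnA[OF i] mn_nonneg mnB[OF i]])
  then show ?thesis by (rule order_trans[OF tr_pr[OF finC finR]])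
qed

lemma T'_le: "i < D \<Longrightarrow> cmod (\<Sum>c\<in>C. pr R (A' i) (B' i) c c) \<le> 1"
proof -
  assume i: "i < D"
  have "mn C R (A' i) * mn C R (B' i) \<le> 1" by (rule mult_le_one[OF mnA'[OF i] mn_nonneg mnB'[OF i]])
  then show ?thesis by (rule order_trans[OF tr_pr[OF finC finR]])
qed

lemma tr_eq: "tr_rho d l rho = (\<Sum>i<D. complex_of_real (\<omega> i) * (\<Sum>c\<in>C. pr R (A i) (B i) c c))"
  unfolding tr_rho_def rho_eq by (subst sum.swap) (simp add: sum_distrib_left)

lemma tr_eq': "tr_rho d l rho' = (\<Sum>i<D. complex_of_real (\<omega> i) * (\<Sum>c\<in>C. pr R (A' i) (B' i) c c))"
  unfolding tr_rho_def rho_eq' by (subst sum.swap) (simp add: sum_distrib_left)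

lemma f_part: "cmod ((tr_rho d l rho)\<^sup>2 - (tr_rho d l rho')\<^sup>2) \<le> 2 * E"
proof -
  have d: "tr_rho d l rho - tr_rho d l rho' = (\<Sum>i<D. complex_of_real (\<omega> i) *
      ((\<Sum>c\<in>C. pr R (A i) (B i) c c) - (\<Sum>c\<in>C. pr R (A' i) (B' i) c c)))"
    unfolding tr_eq tr_eq' by (simp only: right_diff_distrib sum_subtractf)
  have d1: "cmod (tr_rho d l rho - tr_rho d l rho') \<le> E"
    unfolding d by (rule wsum_bound[OF om T_diff])
  have s1: "cmod (tr_rho d l rho) \<le> 1" unfolding tr_eq by (rule wsum_bound[OF om T_le])
  have s2: "cmod (tr_rho d l rho') \<le> 1" unfolding tr_eq' by (rule wsum_bound[OF om T'_le])
  have "cmod ((tr_rho d l rho)\<^sup>2 - (tr_rho d l rho')\<^sup>2)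
     = cmod (tr_rho d l rho + tr_rho d l rho') * cmod (tr_rho d l rho - tr_rho d l rho')"
  proof -
    have "\<And>a b :: complex. a\<^sup>2 - b\<^sup>2 = (a + b) * (a - b)"
      by (simp add: power2_eq_square algebra_simps)
    then show ?thesis by (simp only: norm_mult)
  qed
  also have "\<dots> \<le> 2 * E"
  proof (rule mult_mono)
    show "cmod (tr_rho d l rho + tr_rho d l rho') \<le> 2"
      using norm_triangle_ineq[of "tr_rho d l rho" "tr_rho d l rho'"] s1 s2 by linarith
  qed (use d1 E_nonneg in auto)
  finally show ?thesis .
qed

lemma mn_rho: "mn C C rho \<le> 1"
  unfolding rho_eq
proof (rule wsum_mn[OF om])
  fix i assume i: "i < D"
  show "mn C C (pr R (A i) (B i)) \<le> 1"
    by (rule order_trans[OF hn_pr[OF finC finR] mult_le_one[OF mnA[OF i] mn_nonneg mnB[OF i]]])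
qed

lemma mn_rho': "mn C C rho' \<le> 1"
  unfolding rho_eq'
proof (rule wsum_mn[OF om])
  fix i assume i: "i < D"
  show "mn C C (pr R (A' i) (B' i)) \<le> 1"
    by (rule order_trans[OF hn_pr[OF finC finR] mult_le_one[OF mnA'[OF i] mn_nonneg mnB'[OF i]]])
qed

lemma mn_rho_diff: "mn C C (\<lambda>c c'. rho c c' - rho' c c') \<le> E"
proof -
  have eq: "(\<lambda>c c'. rho c c' - rho' c c') = (\<lambda>c c'. \<Sum>i<D. complex_of_real (\<omega> i) * (pr R (A i) (B i) c c' - pr R (A' i) (B' i) c c'))"
    unfolding rho_eq rho_eq' by (simp only: right_diff_distrib sum_subtractf)
  show ?thesis unfolding eq
  proof (rule wsum_mn[OF om])
    fix i assume i: "i < D"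
    show "mn C C (\<lambda>c c'. pr R (A i) (B i) c c' - pr R (A' i) (B' i) c c') \<le> E"
      using mn_diff_pr[OF finC finR mnB[OF i] mnA'[OF i], where A="A i" and B'="B' i"] e_bound[OF i] by linarith
  qed
qed

lemma g_part: "cmod (tr_rho_sq d l rho - tr_rho_sq d l rho') \<le> 2 * E"
proof -
  have "cmod (tr_rho_sq d l rho - tr_rho_sq d l rho') \<le> mn C C (\<lambda>c c'. rho c c' - rho' c c') * (mn C C rho + mn C C rho')"
    unfolding tr_rho_sq_def by (rule G_diff)
  also have "\<dots> \<le> E * 2"
    using mn_rho_diff mn_rho mn_rho' mn_nonneg[of C C "\<lambda>c c'. rho c c' - rho' c c'"] mn_nonneg[of C C rho] mn_nonneg[of C C rho']
    by (intro mult_mono) auto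
  finally show ?thesis by simp
qed

end



theorem theorem7:
  fixes d D t l :: nat and \<omega> :: "nat \<Rightarrow> real" and z :: "nat \<Rightarrow> complex"
    and U V W U' V' W' :: "nat \<Rightarrow> nat \<Rightarrow> complex" and L L' :: "nat \<Rightarrow> real"
  assumes "d \<ge> 1" "D \<ge> 1" "t \<ge> 1" "l \<ge> 1"
    and "\<forall>i<D. \<omega> i \<ge> 0" "(\<Sum>i<D. \<omega> i) = 1"
    and "(\<Sum>k<d. (cmod (z k))\<^sup>2) = 1"
    and "in_X d D U V W L" "in_X d D U' V' W' L'"
  shows "cmod ((tr_rho d l (rho_l d D t l \<omega> z U V W L))\<^sup>2
               - (tr_rho d l (rho_l d D t l \<omega> z U' V' W' L'))\<^sup>2)
           \<le> (4 * real (2 * t + l) + 10) * d1 d D (U, V, W, L) (U', V', W', L')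
       \<and> cmod (tr_rho_sq d l (rho_l d D t l \<omega> z U V W L)
               - tr_rho_sq d l (rho_l d D t l \<omega> z U' V' W' L'))
           \<le> (4 * real (2 * t + l) + 10) * d1 d D (U, V, W, L) (U', V', W', L')"
proof -
  interpret s: setting2 d D "2 * t + l" z U V W U' V' W' L L' t l \<omega>
    by unfold_locales (use assms in auto)
  let ?u = "hs_dist (d * D) U U'" and ?v = "hs_dist D V V'" and ?w = "hs_dist D W W'" and ?lam = "diag_dist D L L'"
  let ?n = "real (2 * t + l)"
  have nn: "0 \<le> ?u" "0 \<le> ?v" "0 \<le> ?w" "0 \<le> ?lam"
    using hs_dist_nonneg diag_dist_nonneg[OF assms(2)] by auto
  have dd: "d1 d D (U, V, W, L) (U', V', W', L') = ?u + ?v + ?w + ?lam" unfolding d1_def by simp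
  have key: "2 * (2 * ?v + ?lam + 2 * (?n * ?u + ?w)) \<le> (4 * ?n + 10) * (?u + ?v + ?w + ?lam)"
  proof -
    have "0 \<le> ?n * ?lam" "0 \<le> ?n * ?v" "0 \<le> ?n * ?w" using nn by auto
    then show ?thesis using nn by (simp add: algebra_simps)
  qed
  show ?thesis unfolding dd using s.f_part s.g_part key by linarith
qed


end
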